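(* Let $\eta>0$, $\omega\in(0,1)$, $S\ge2$ an integer, and $x\in\mathbb R^d$. Let $C(x)$ denote the number of bits used by the ANQ (with bias $\eta$, compression rate $\omega$, and constellation of $S+1$ symbols) to quantize $x$ componentwise and encode the $d$ resulting indices. Then: (i) for the deterministic ANQ, $$C(x)\le3d\log_2(S+1)+d\log_2(S+1)\log_S\Big(2+\frac{\ln(1-\omega)+\ln\big(1+\frac{\omega\|x\|_2}{\sqrt d\,\eta}\big)}{\ln(1+\omega)-\ln(1-\omega)}\Big);$$ (ii) for the probabilistic ANQ, almost surely, $$C(x)\le3d\log_2(S+1)+d\log_2(S+1)\log_S\Big(2+\frac{\ln\big(1+\frac{\omega\|x\|_2}{\sqrt d\,\eta}\big)}{2\ln\big(\sqrt{1+\omega^2}+\omega\big)}\Big).$$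
   Context: ANQ (Adaptive encoding Non-uniform Quantizer) with parameters $\eta>0$, $\omega\in(0,1)$, applied componentwise to vectors in $\mathbb R^d$. Deterministic ANQ: scalar points $q_\ell=-q_{-\ell}=\frac{\eta}{\omega}[(\frac{1+\omega}{1-\omega})^\ell-1]$ ($\ell\ge0$); a scalar $x$ is mapped to index $\ell(x)=\mathrm{sign}(x)\lceil\frac{\ln(1-\omega)+\ln(1+\omega|x|/\eta)}{\ln(1+\omega)-\ln(1-\omega)}\rceil$ and value $q_{\ell(x)}$. Probabilistic ANQ: scalar points $q_\ell=-q_{-\ell}=\frac{\eta}{\omega}[(\sqrt{1+\omega^2}+\omega)^{2\ell}-1]$ ($\ell\ge0$); for $x\ge0$ let $\ell=\lceil\frac{\ln(1+\omega x/\eta)}{2\ln(\sqrt{1+\omega^2}+\omega)}\rceil$ and output index $\ell-1$ with probability $\frac{q_\ell-x}{q_\ell-q_{\ell-1}}$, index $\ell$ with probability $\frac{x-q_{\ell-1}}{q_\ell-q_{\ell-1}}$ (index $0$ for $x=0$); for $x<0$ use the negated index of $-x$. Encoding: symbols from $\{0,1,\dots,S\}$, each costing $\log_2(S+1)$ bits. Let $\tilde{\mathcal L}_{-1}=\emptyset$ and for $b\ge0$, $\tilde{\mathcal L}_b=\{-\lceil\frac{S^{b+1}-1}{2(S-1)}\rceil+1,\dots,\lfloor\frac{S^{b+1}-1}{2(S-1)}\rfloor\}$, $\mathcal L_b=\tilde{\mathcal L}_b\setminus\tilde{\mathcal L}_{b-1}$ (these partition $\mathbb Z$ and $|\mathcal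 L_b|=S^b$). An index $\ell\in\mathcal L_b$ is encoded by a unique string of $b$ symbols from $\{1,\dots,S\}$ followed by the symbol $0$, i.e., with $(b+1)\log_2(S+1)$ bits. The cost $C(x)$ of a vector is the sum of the costs of its $d$ component indices. *)

theory Defs
  imports "HOL-Analysis.Analysis" "HOL-Probability.Product_PMF"
begin

text \<open>Tilde L_b for b = 0,1,2,...; the set Tilde L_{-1} is empty.\<close>
definition Ltilde :: "nat \<Rightarrow> nat \<Rightarrow> int set" where
  "Ltilde S b =
     {- \<lceil>(real S ^ (b+1) - 1) / (2 * (real S - 1))\<rceil> + 1 ..
        \<lfloor>(real S ^ (b+1) - 1) / (2 * (real S - 1))\<rfloor>}"

definition Lset :: "nat \<Rightarrow> nat \<Rightarrow> int set" where
  "Lset S b = (if b = 0 then Ltilde S 0 else Ltilde S b - Ltilde S (b - 1))"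

text \<open>An index in L_b costs (b+1) symbols, each of log2(S+1) bits.\<close>
definition index_cost :: "nat \<Rightarrow> int \<Rightarrow> real" where
  "index_cost S l = real ((THE b. l \<in> Lset S b) + 1) * log 2 (real S + 1)"

definition vec_cost :: "nat \<Rightarrow> ('n::finite \<Rightarrow> int) \<Rightarrow> real" where
  "vec_cost S k = (\<Sum>i\<in>UNIV. index_cost S (k i))"

definition det_q :: "real \<Rightarrow> real \<Rightarrow> int \<Rightarrow> real" where
  "det_q \<eta> \<omega> l = (if l \<ge> 0
     then \<eta> / \<omega> * (((1 + \<omega>) / (1 - \<omega>)) ^ nat l - 1)
     else - (\<eta> / \<omega> * (((1 + \<omega>) / (1 - \<omega>)) ^ nat (- l) - 1)))"

definition det_index :: "real \<Rightarrow> real \<Rightarrow> real \<Rightarrow> int" where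
  "det_index \<eta> \<omega> x = (if x > 0 then 1 else if x < 0 then -1 else 0) *
     \<lceil>(ln (1 - \<omega>) + ln (1 + \<omega> * \<bar>x\<bar> / \<eta>)) / (ln (1 + \<omega>) - ln (1 - \<omega>))\<rceil>"

definition prob_q :: "real \<Rightarrow> real \<Rightarrow> int \<Rightarrow> real" where
  "prob_q \<eta> \<omega> l = (if l \<ge> 0
     then \<eta> / \<omega> * ((sqrt (1 + \<omega>^2) + \<omega>) ^ (2 * nat l) - 1)
     else - (\<eta> / \<omega> * ((sqrt (1 + \<omega>^2) + \<omega>) ^ (2 * nat (- l)) - 1)))"

definition prob_index_nonneg :: "real \<Rightarrow> real \<Rightarrow> real \<Rightarrow> int pmf" where
  "prob_index_nonneg \<eta> \<omega> x =
     (if x = 0 then return_pmf 0 else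
      (let l = \<lceil>ln (1 + \<omega> * x / \<eta>) / (2 * ln (sqrt (1 + \<omega>^2) + \<omega>))\<rceil>
       in map_pmf (\<lambda>up. if up then l else l - 1)
            (bernoulli_pmf ((x - prob_q \<eta> \<omega> (l - 1)) / (prob_q \<eta> \<omega> l - prob_q \<eta> \<omega> (l - 1))))))"

definition prob_index :: "real \<Rightarrow> real \<Rightarrow> real \<Rightarrow> int pmf" where
  "prob_index \<eta> \<omega> x =
     (if x \<ge> 0 then prob_index_nonneg \<eta> \<omega> x
      else map_pmf uminus (prob_index_nonneg \<eta> \<omega> (- x)))"

definition prob_index_vec :: "real \<Rightarrow> real \<Rightarrow> real ^ 'n \<Rightarrow> ('n::finite \<Rightarrow> int) pmf" where
  "prob_index_vec \<eta> \<omega> x = Pi_pmf UNIV 0 (\<lambda>i. prob_index \<eta> \<omega> (x $ i))"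

end

theory Submission
  imports Defs
begin

definition TT :: "nat \<Rightarrow> nat \<Rightarrow> real" where
  "TT S b = (real S ^ (b+1) - 1) / (2 * (real S - 1))"

lemma Ltilde_TT: "Ltilde S b = {- \<lceil>TT S b\<rceil> + 1 .. \<lfloor>TT S b\<rfloor>}"
  by (simp add: Ltilde_def TT_def)

lemma TT_mono: assumes "S \<ge> 2" "b \<le> b'" shows "TT S b \<le> TT S b'"
proof -
  have "real S ^ (b+1) \<le> real S ^ (b'+1)"
    using assms by (intro power_increasing) auto
  moreover have "2 * (real S - 1) > 0" using assms by auto
  ultimately show ?thesis unfolding TT_def by (intro divide_right_mono) auto
qed

lemma Ltilde_mono: assumes "S \<ge> 2" "b \<le> b'" shows "Ltilde S b \<subseteq> Ltilde S b'"
proof -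
  have "TT S b \<le> TT S b'" using TT_mono[OF assms] .
  hence "\<lceil>TT S b\<rceil> \<le> \<lceil>TT S b'\<rceil>" "\<lfloor>TT S b\<rfloor> \<le> \<lfloor>TT S b'\<rfloor>"
    by (auto intro: ceiling_mono floor_mono)
  thus ?thesis unfolding Ltilde_TT by auto
qed

lemma in_Ltilde: assumes "real_of_int \<bar>l\<bar> + 1 \<le> TT S b" shows "l \<in> Ltilde S b"
proof -
  have "\<bar>l\<bar> \<le> \<lfloor>TT S b\<rfloor>" using assms by linarith
  moreover have "\<bar>l\<bar> + 1 \<le> \<lceil>TT S b\<rceil>" using assms by linarith
  ultimately show ?thesis unfolding Ltilde_TT by auto
qed

lemma Ltilde_ex: assumes "S \<ge> 2" shows "l \<in> Ltilde S (2 * nat \<bar>l\<bar> + 1)"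
proof (rule in_Ltilde)
  define n where "n = nat \<bar>l\<bar>"
  have "1 + real (2*n+2) * (real S - 1) \<le> (1 + (real S - 1)) ^ (2*n+2)"
    using assms by (intro Bernoulli_inequality) auto
  hence "real (2*n+2) * (real S - 1) \<le> real S ^ (2*n+2) - 1" by simp
  moreover have "real S - 1 > 0" using assms by auto
  ultimately have "real n + 1 \<le> (real S ^ (2*n+2) - 1) / (2 * (real S - 1))"
    by (simp add: field_simps)
  moreover have "real_of_int \<bar>l\<bar> = real n" unfolding n_def by simp
  ultimately show "real_of_int \<bar>l\<bar> + 1 \<le> TT S (2 * nat \<bar>l\<bar> + 1)"
    unfolding TT_def n_def by (simp add: algebra_simps)
qed

lemma index_cost_bound:
  assumes S: "S \<ge> 2"
  shows "index_cost S l \<le> (3 + log (real S) (1 + real_of_int \<bar>l\<bar>)) * log 2 (real S + 1)"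
proof -
  define P where "P b = (l \<in> Ltilde S b)" for b
  have ex: "\<exists>b. P b" using Ltilde_ex[OF S] unfolding P_def by blast
  define b0 where "b0 = (LEAST b. P b)"
  have Pb0: "P b0" unfolding b0_def using ex by (metis LeastI)
  have min: "\<And>b. P b \<Longrightarrow> b0 \<le> b" unfolding b0_def by (rule Least_le)
  have mono: "\<And>b b'. P b \<Longrightarrow> b \<le> b' \<Longrightarrow> P b'"
    unfolding P_def using Ltilde_mono[OF S] by blast
  have iff: "l \<in> Lset S b \<longleftrightarrow> b = b0" for b
  proof
    assume h: "l \<in> Lset S b"
    hence Pb: "P b" by (auto simp: Lset_def P_def split: if_splits)
    have "b0 \<le> b" using min[OF Pb] .
    moreover have "\<not> b0 < b"
    proof
      assume "b0 < b"
      hence "P (b - 1)" using mono[OF Pb0] by auto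
      thus False using h \<open>b0 < b\<close> by (auto simp: Lset_def P_def split: if_splits)
    qed
    ultimately show "b = b0" by auto
  next
    assume "b = b0"
    thus "l \<in> Lset S b"
      using Pb0 min[of "b0 - 1"] by (cases "b0 = 0") (auto simp: Lset_def P_def)
  qed
  have the: "(THE b. l \<in> Lset S b) = b0" using iff by auto
  have Sgt: "real S > 1" using S by auto
  have lg0: "log (real S) (1 + real_of_int \<bar>l\<bar>) \<ge> 0" using Sgt by simp
  have L2: "log 2 (real S + 1) \<ge> 0" by simp
  have "real b0 + 1 \<le> 3 + log (real S) (1 + real_of_int \<bar>l\<bar>)"
  proof (cases "b0 = 0")
    case True thus ?thesis using lg0 by simp
  next
    case False
    have "\<not> P (b0 - 1)" using min[of "b0-1"] False by auto
    hence "\<not> real_of_int \<bar>l\<bar> + 1 \<le> TT S (b0 - 1)" unfolding P_def using in_Ltilde by blast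
    hence "(real S ^ b0 - 1) / (2 * (real S - 1)) < real_of_int \<bar>l\<bar> + 1"
      using False unfolding TT_def by simp
    hence "real S ^ b0 - 1 < (real_of_int \<bar>l\<bar> + 1) * (2 * (real S - 1))"
      using Sgt by (simp add: divide_less_eq)
    moreover have "2 * (real S - 1) \<le> real S ^ 2 - 1"
    proof -
      have "real S ^ 2 - 1 - 2*(real S - 1) = (real S - 1)^2" by (simp add: power2_eq_square algebra_simps)
      moreover have "(real S - 1)^2 \<ge> 0" by simp
      ultimately show ?thesis by linarith
    qed
    hence "(real_of_int \<bar>l\<bar> + 1) * (2 * (real S - 1)) \<le> (real_of_int \<bar>l\<bar> + 1) * (real S ^ 2 - 1)"
      by (intro mult_left_mono) auto
    moreover have "(real_of_int \<bar>l\<bar> + 1) * (real S ^ 2 - 1) \<le> (real_of_int \<bar>l\<bar> + 1) * real S ^ 2 - 1"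
      by (simp add: algebra_simps)
    ultimately have "real S ^ b0 < (real_of_int \<bar>l\<bar> + 1) * real S ^ 2" by linarith
    hence "log (real S) (real S ^ b0) < log (real S) ((real_of_int \<bar>l\<bar> + 1) * real S ^ 2)"
      using Sgt by (subst log_less_cancel_iff) auto
    also have "\<dots> = log (real S) (1 + real_of_int \<bar>l\<bar>) + 2"
      using Sgt by (simp add: log_mult log_nat_power add.commute)
    finally have "real b0 < log (real S) (1 + real_of_int \<bar>l\<bar>) + 2"
      using Sgt by (simp add: log_nat_power)
    thus ?thesis by simp
  qed
  thus ?thesis unfolding index_cost_def the using L2
    by (intro mult_right_mono) auto
qed



lemma tangent:
  fixes a L c S t t0 :: real
  assumes "S > 1" "a > 0" "L > 0" "-L < c" "t \<ge> 0" "t0 \<ge> 0"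
  defines "G \<equiv> \<lambda>t. 2 + (c + ln (1 + a * t)) / L"
  shows "log S (G t) \<le> log S (G t0) + a * (t - t0) / ((1 + a * t0) * L * G t0 * ln S)"
proof -
  have Gpos: "G u > 1" if "u \<ge> 0" for u
  proof -
    have "ln (1 + a * u) \<ge> 0" using assms that by simp
    moreover have "c / L > -1" using assms by (simp add: field_simps)
    ultimately have "(c + ln (1 + a * u)) / L > -1" using assms
      by (simp add: field_simps)
    thus ?thesis unfolding G_def by simp
  qed
  have g0: "G t > 0" "G t0 > 0" using Gpos assms by force+
  have p: "1 + a * t > 0" "1 + a * t0 > 0" using assms by (auto intro: add_pos_nonneg)
  have "G t - G t0 = (ln (1 + a*t) - ln (1 + a*t0)) / L" unfolding G_def using assms by (simp add: field_simps)
  also have "\<dots> \<le> ((1 + a*t) - (1 + a*t0)) / (1 + a*t0) / L"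
    using ln_diff_le[OF p] assms by (intro divide_right_mono) auto
  also have "\<dots> = a * (t - t0) / ((1 + a*t0) * L)" by (simp add: algebra_simps)
  finally have d1: "G t - G t0 \<le> a * (t - t0) / ((1 + a*t0) * L)" .
  have "ln (G t) - ln (G t0) \<le> (G t - G t0) / G t0" using ln_diff_le g0 by auto
  also have "\<dots> \<le> a * (t - t0) / ((1 + a*t0) * L) / G t0" using d1 g0 by (intro divide_right_mono) auto
  finally have "ln (G t) - ln (G t0) \<le> a * (t - t0) / ((1 + a*t0) * L * G t0)" by simp
  hence "(ln (G t) - ln (G t0)) / ln S \<le> a * (t - t0) / ((1 + a*t0) * L * G t0) / ln S"
    using assms by (intro divide_right_mono) auto
  thus ?thesis unfolding log_def by (simp add: diff_divide_distrib)
qed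

lemma sum_bound:
  fixes t :: "'n::finite \<Rightarrow> real" and k :: "'n \<Rightarrow> int" and a L c T :: real
  assumes S: "S \<ge> 2" and a: "a > 0" and L: "L > 0" and c: "-L < c" and t: "\<And>i. t i \<ge> 0"
    and k: "\<And>i. real_of_int \<bar>k i\<bar> \<le> (c + ln (1 + a * t i)) / L + 1"
    and T: "(\<Sum>i\<in>UNIV. t i) \<le> real CARD('n) * T"
  shows "vec_cost S k \<le> 3 * real CARD('n) * log 2 (real S + 1)
             + real CARD('n) * log 2 (real S + 1) * log (real S) (2 + (c + ln (1 + a * T)) / L)"
proof -
  define G where "G \<equiv> \<lambda>t. 2 + (c + ln (1 + a * t)) / L"
  define d where "d = real CARD('n)"
  have d: "d > 0" unfolding d_def by simp
  define t0 where "t0 = (\<Sum>i\<in>UNIV. t i) / d"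
  have t0: "t0 \<ge> 0" unfolding t0_def using t d by (simp add: sum_nonneg)
  have t0T: "t0 \<le> T" unfolding t0_def using T d by (simp add: d_def divide_le_eq mult.commute)
  have Sg: "real S > 1" using S by simp
  have Gpos: "G u > 1" if "u \<ge> 0" for u
  proof -
    have "ln (1 + a * u) \<ge> 0" using a that by simp
    moreover have "c / L > -1" using L c by (simp add: field_simps)
    ultimately have "(c + ln (1 + a * u)) / L > -1" using L
      by (simp add: field_simps)
    thus ?thesis unfolding G_def by simp
  qed
  define K where "K = a / ((1 + a * t0) * L * G t0 * ln (real S))"
  have each: "log (real S) (1 + real_of_int \<bar>k i\<bar>) \<le> log (real S) (G t0) + K * (t i - t0)" for i
  proof -
    have "log (real S) (1 + real_of_int \<bar>k i\<bar>) \<le> log (real S) (G (t i))"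
      using k[of i] Sg unfolding G_def by (subst log_le_cancel_iff) auto
    also have "\<dots> \<le> log (real S) (G t0) + K * (t i - t0)"
      using tangent[OF Sg a L c t[of i] t0] unfolding G_def K_def by simp
    finally show ?thesis .
  qed
  have sumz: "(\<Sum>i\<in>UNIV. K * (t i - t0)) = 0"
    using d by (simp add: sum_distrib_left[symmetric] sum_subtractf t0_def d_def)
  have "vec_cost S k \<le> (\<Sum>i\<in>UNIV. (3 + log (real S) (1 + real_of_int \<bar>k i\<bar>)) * log 2 (real S + 1))"
    unfolding vec_cost_def using index_cost_bound[OF S] by (intro sum_mono) auto
  also have "\<dots> = (\<Sum>i\<in>UNIV. (3 + log (real S) (1 + real_of_int \<bar>k i\<bar>))) * log 2 (real S + 1)"
    by (simp add: sum_distrib_right)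
  also have "\<dots> \<le> (\<Sum>i\<in>UNIV. (3 + log (real S) (G t0) + K * (t i - t0))) * log 2 (real S + 1)"
    using each by (intro mult_right_mono sum_mono) auto
  also have "(\<Sum>i\<in>UNIV. (3 + log (real S) (G t0) + K * (t i - t0))) = d * (3 + log (real S) (G t0))"
    using sumz by (simp add: sum.distrib d_def)
  also have "log (real S) (G t0) \<le> log (real S) (G T)"
  proof -
    have "ln (1 + a * t0) \<le> ln (1 + a * T)" using a t0 t0T
      by (subst ln_le_cancel_iff) (auto intro: add_pos_nonneg mult_left_mono)
    hence "G t0 \<le> G T" unfolding G_def using L by (simp add: divide_right_mono)
    thus ?thesis using Sg Gpos[OF t0] by (subst log_le_cancel_iff) auto
  qed
  hence "d * (3 + log (real S) (G t0)) * log 2 (real S + 1) \<le> d * (3 + log (real S) (G T)) * log 2 (real S + 1)"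
    using d by (intro mult_right_mono mult_left_mono) auto
  finally show ?thesis unfolding d_def G_def by (simp add: algebra_simps)
qed



lemma sum_abs_le_norm:
  fixes x :: "real ^ 'n"
  shows "(\<Sum>i\<in>UNIV. \<bar>x $ i\<bar>) \<le> real CARD('n) * (norm x / sqrt (real CARD('n)))"
proof -
  define v :: "real ^ 'n" where "v = (\<chi> i. \<bar>x $ i\<bar>)"
  define one :: "real ^ 'n" where "one = (\<chi> i. 1)"
  have "inner v one = (\<Sum>i\<in>UNIV. \<bar>x $ i\<bar>)" unfolding v_def one_def inner_vec_def by simp
  moreover have "norm v = norm x" unfolding v_def norm_vec_def L2_set_def by simp
  moreover have "norm one = sqrt (real CARD('n))" unfolding one_def norm_vec_def L2_set_def by simp
  ultimately have "(\<Sum>i\<in>UNIV. \<bar>x $ i\<bar>) \<le> norm x * sqrt (real CARD('n))"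
    using Cauchy_Schwarz_ineq2[of v one] by simp
  also have "\<dots> = real CARD('n) * (norm x / sqrt (real CARD('n)))"
    proof -
    have "sqrt (real CARD('n)) * sqrt (real CARD('n)) = real CARD('n)" by simp
    moreover have "sqrt (real CARD('n)) > 0" by simp
    ultimately show ?thesis by (simp add: field_simps)
  qed
  finally show ?thesis .
qed

lemma det_bound:
  assumes "\<eta> > 0" "0 < \<omega>" "\<omega> < 1"
  shows "real_of_int \<bar>det_index \<eta> \<omega> y\<bar>
     \<le> (ln (1 - \<omega>) + ln (1 + \<omega> / \<eta> * \<bar>y\<bar>)) / (ln (1 + \<omega>) - ln (1 - \<omega>)) + 1"
proof -
  define L where "L = ln (1 + \<omega>) - ln (1 - \<omega>)"
  define f where "f = (ln (1 - \<omega>) + ln (1 + \<omega> / \<eta> * \<bar>y\<bar>)) / L"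
  have l1: "ln (1 + \<omega>) > 0" using assms by simp
  have l2: "ln (1 - \<omega>) < 0" using assms by simp
  have L: "L > 0" unfolding L_def using l1 l2 by simp
  have "ln (1 + \<omega> / \<eta> * \<bar>y\<bar>) \<ge> 0" using assms by simp
  hence "ln (1 - \<omega>) + ln (1 + \<omega> / \<eta> * \<bar>y\<bar>) > - L" unfolding L_def using l1 by linarith
  hence fgt: "f > -1" unfolding f_def using L by (simp add: field_simps)
  have eq: "det_index \<eta> \<omega> y = (if y > 0 then 1 else if y < 0 then -1 else 0) * \<lceil>f\<rceil>"
    unfolding det_index_def f_def L_def by (simp add: mult.commute)
  have c0: "\<lceil>f\<rceil> \<ge> 0" using fgt by linarith
  have c1: "real_of_int \<lceil>f\<rceil> \<le> f + 1" by linarith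
  have "\<bar>det_index \<eta> \<omega> y\<bar> \<le> \<lceil>f\<rceil>" unfolding eq using c0 by auto
  hence "real_of_int \<bar>det_index \<eta> \<omega> y\<bar> \<le> f + 1" using c1 by linarith
  thus ?thesis unfolding f_def L_def .
qed

lemma prob_nonneg_bound:
  assumes "\<eta> > 0" "0 < \<omega>" "\<omega> < 1" "y \<ge> 0" "k \<in> set_pmf (prob_index_nonneg \<eta> \<omega> y)"
  shows "real_of_int \<bar>k\<bar> \<le> (0 + ln (1 + \<omega> / \<eta> * y)) / (2 * ln (sqrt (1 + \<omega>^2) + \<omega>)) + 1"
proof -
  define L where "L = 2 * ln (sqrt (1 + \<omega>^2) + \<omega>)"
  define f where "f = ln (1 + \<omega> * y / \<eta>) / L"
  have "sqrt (1 + \<omega>^2) \<ge> 1" by simp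
  hence "sqrt (1 + \<omega>^2) + \<omega> > 1" using assms by linarith
  hence L: "L > 0" unfolding L_def by simp
  have "ln (1 + \<omega> * y / \<eta>) \<ge> 0" using assms by simp
  hence f0: "f \<ge> 0" unfolding f_def using L by simp
  have "real_of_int \<bar>k\<bar> \<le> f + 1"
  proof (cases "y = 0")
    case True thus ?thesis using assms f0 by (simp add: prob_index_nonneg_def)
  next
    case False
    hence "k = \<lceil>f\<rceil> \<or> k = \<lceil>f\<rceil> - 1" using assms(5)
      by (auto simp: prob_index_nonneg_def Let_def f_def L_def)
    moreover have "\<lceil>f\<rceil> \<ge> 0" using f0 by simp
    moreover have c1: "real_of_int \<lceil>f\<rceil> \<le> f + 1" by linarith
    ultimately show ?thesis using f0 by (auto simp: abs_if) (use c1 in linarith)+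
  qed
  thus ?thesis unfolding f_def L_def by (simp add: mult.commute)
qed

lemma prob_bound:
  assumes "\<eta> > 0" "0 < \<omega>" "\<omega> < 1" "k \<in> set_pmf (prob_index \<eta> \<omega> y)"
  shows "real_of_int \<bar>k\<bar> \<le> (0 + ln (1 + \<omega> / \<eta> * \<bar>y\<bar>)) / (2 * ln (sqrt (1 + \<omega>^2) + \<omega>)) + 1"
proof (cases "y \<ge> 0")
  case True thus ?thesis using assms prob_nonneg_bound[of \<eta> \<omega> y k] by (simp add: prob_index_def)
next
  case False
  then obtain k' where "k = - k'" "k' \<in> set_pmf (prob_index_nonneg \<eta> \<omega> (-y))"
    using assms(4) by (auto simp: prob_index_def)
  thus ?thesis using assms False prob_nonneg_bound[of \<eta> \<omega> "-y" k'] by simp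
qed


theorem lemma3:
  fixes \<eta> \<omega> :: real and S :: nat and x :: "real ^ 'n"
  assumes "\<eta> > 0" and "0 < \<omega>" and "\<omega> < 1" and "S \<ge> 2"
  shows "(vec_cost S (\<lambda>i. det_index \<eta> \<omega> (x $ i))
           \<le> 3 * real CARD('n) * log 2 (real S + 1)
             + real CARD('n) * log 2 (real S + 1) *
               log (real S) (2 + (ln (1 - \<omega>) + ln (1 + \<omega> * norm x / (sqrt (real CARD('n)) * \<eta>)))
                                 / (ln (1 + \<omega>) - ln (1 - \<omega>))))
    \<and> (AE k in measure_pmf (prob_index_vec \<eta> \<omega> x).
           vec_cost S k
           \<le> 3 * real CARD('n) * log 2 (real S + 1)
             + real CARD('n) * log 2 (real S + 1) *
               log (real S) (2 + ln (1 + \<omega> * norm x / (sqrt (real CARD('n)) * \<eta>))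
                                 / (2 * ln (sqrt (1 + \<omega>^2) + \<omega>))))"
proof -
  note as = assms
  define d where "d = real CARD('n)"
  define T where "T = norm x / sqrt d"
  have eqT: "\<omega> * norm x / (sqrt d * \<eta>) = \<omega> / \<eta> * T" unfolding T_def by simp
  have sumT: "(\<Sum>i\<in>UNIV. \<bar>x $ i\<bar>) \<le> d * T" unfolding d_def T_def by (rule sum_abs_le_norm)
  have a: "\<omega> / \<eta> > 0" using as by simp
  have l1: "ln (1 + \<omega>) > 0" using as by simp
  have l2: "ln (1 - \<omega>) < 0" using as by simp
  have r1: "sqrt (1 + \<omega>^2) \<ge> 1" by simp
  hence "sqrt (1 + \<omega>^2) + \<omega> > 1" using as by linarith
  hence L2: "2 * ln (sqrt (1 + \<omega>^2) + \<omega>) > 0" by simp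
  have P1: "vec_cost S (\<lambda>i. det_index \<eta> \<omega> (x $ i))
           \<le> 3 * d * log 2 (real S + 1) + d * log 2 (real S + 1) *
             log (real S) (2 + (ln (1 - \<omega>) + ln (1 + \<omega> / \<eta> * T)) / (ln (1 + \<omega>) - ln (1 - \<omega>)))"
    unfolding d_def
    by (rule sum_bound[where t = "\<lambda>i. \<bar>x $ i\<bar>"])
       (use as a l1 l2 sumT det_bound[OF as(1-3)] in \<open>auto simp: d_def\<close>)
  have P2: "AE k in measure_pmf (prob_index_vec \<eta> \<omega> x).
           vec_cost S k \<le> 3 * d * log 2 (real S + 1) + d * log 2 (real S + 1) *
             log (real S) (2 + (0 + ln (1 + \<omega> / \<eta> * T)) / (2 * ln (sqrt (1 + \<omega>^2) + \<omega>)))"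
  proof (rule AE_pmfI)
    fix k assume k: "k \<in> set_pmf (prob_index_vec \<eta> \<omega> x)"
    have ki: "k i \<in> set_pmf (prob_index \<eta> \<omega> (x $ i))" for i
      using k by (simp add: prob_index_vec_def set_Pi_pmf PiE_dflt_def)
    show "vec_cost S k \<le> 3 * d * log 2 (real S + 1) + d * log 2 (real S + 1) *
             log (real S) (2 + (0 + ln (1 + \<omega> / \<eta> * T)) / (2 * ln (sqrt (1 + \<omega>^2) + \<omega>)))"
      unfolding d_def
      by (rule sum_bound[where t = "\<lambda>i. \<bar>x $ i\<bar>"])
         (use as a L2 sumT prob_bound[OF as(1-3) ki] in \<open>auto simp: d_def\<close>)
  qed
  show ?thesis using P1 P2 unfolding d_def[symmetric] eqT by simp
qed

end
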